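(* Let $F$ be a minimally unsatisfiable clause-set and $F',F''\in\mathrm{sDP}(F)$. Then $n(F')=n(F'')$.
   Context: Literals are variables $v$ and complements $\overline{v}$; a clause is a finite set of literals with no complementary pair; a clause-set is a finite set of clauses; $n(F)$ is the number of variables occurring in $F$; $\mathrm{ldeg}_F(x)$ is the number of clauses of $F$ containing literal $x$. $\mathrm{DP}_v(F) := \{C \in F : v \notin \mathrm{var}(C)\} \cup \{(C \cup D)\setminus\{v,\overline{v}\} : C, D \in F,\ C \cap \overline{D} = \{v\}\}$. A variable $v$ is singular for $F$ if $\min(\mathrm{ldeg}_F(v),\mathrm{ldeg}_F(\overline{v}))=1$; $F$ is nonsingular if it has none. A singular DP-reduction step is $F\leadsto\mathrm{DP}_v(F)$ for minimally unsatisfiable $F$ and $v$ singular for $F$. $\mathrm{sDP}(F)$ is the set of nonsingular minimally unsatisfiable clause-sets obtainable from $F$ by zero or more singular DP-reduction steps. *)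

theory Defs
  imports Main
begin

datatype 'v lit = Pos 'v | Neg 'v

fun var :: "'v lit \<Rightarrow> 'v" where
  "var (Pos v) = v" | "var (Neg v) = v"

fun comp :: "'v lit \<Rightarrow> 'v lit" where
  "comp (Pos v) = Neg v" | "comp (Neg v) = Pos v"

type_synonym 'v clause = "'v lit set"
type_synonym 'v cls = "'v clause set"

definition clause :: "'v clause \<Rightarrow> bool" where
  "clause C \<longleftrightarrow> finite C \<and> (\<forall>x\<in>C. comp x \<notin> C)"

definition clause_set :: "'v cls \<Rightarrow> bool" where
  "clause_set F \<longleftrightarrow> finite F \<and> (\<forall>C\<in>F. clause C)"

definition vars_cl :: "'v clause \<Rightarrow> 'v set" where
  "vars_cl C = var ` C"

definition vars :: "'v cls \<Rightarrow> 'v set" where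
  "vars F = (\<Union>C\<in>F. vars_cl C)"

definition nvars :: "'v cls \<Rightarrow> nat" where
  "nvars F = card (vars F)"

definition ldeg :: "'v cls \<Rightarrow> 'v lit \<Rightarrow> nat" where
  "ldeg F x = card {C \<in> F. x \<in> C}"

fun lit_true :: "('v \<Rightarrow> bool) \<Rightarrow> 'v lit \<Rightarrow> bool" where
  "lit_true a (Pos v) = a v" | "lit_true a (Neg v) = (\<not> a v)"

definition satisfiable :: "'v cls \<Rightarrow> bool" where
  "satisfiable F \<longleftrightarrow> (\<exists>a. \<forall>C\<in>F. \<exists>x\<in>C. lit_true a x)"

definition min_unsat :: "'v cls \<Rightarrow> bool" where
  "min_unsat F \<longleftrightarrow> clause_set F \<and> \<not> satisfiable F \<and> (\<forall>G. G \<subset> F \<longrightarrow> satisfiable G)"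

definition DP :: "'v \<Rightarrow> 'v cls \<Rightarrow> 'v cls" where
  "DP v F = {C \<in> F. v \<notin> vars_cl C}
     \<union> {(C \<union> D) - {Pos v, Neg v} | C D. C \<in> F \<and> D \<in> F \<and> C \<inter> comp ` D = {Pos v}}"

definition singular :: "'v cls \<Rightarrow> 'v \<Rightarrow> bool" where
  "singular F v \<longleftrightarrow> v \<in> vars F \<and> min (ldeg F (Pos v)) (ldeg F (Neg v)) = 1"

definition nonsingular :: "'v cls \<Rightarrow> bool" where
  "nonsingular F \<longleftrightarrow> (\<forall>v. \<not> singular F v)"

definition sDP_step :: "'v cls \<Rightarrow> 'v cls \<Rightarrow> bool" where
  "sDP_step F G \<longleftrightarrow> min_unsat F \<and> (\<exists>v. singular F v \<and> G = DP v F)"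

definition sDP :: "'v cls \<Rightarrow> 'v cls set" where
  "sDP F = {G. sDP_step\<^sup>*\<^sup>* F G \<and> nonsingular G \<and> min_unsat G}"

end

theory Submission
  imports Defs
begin



lemma comp_comp[simp]: "comp (comp l) = l" by (cases l) auto
lemma var_comp[simp]: "var (comp l) = var l" by (cases l) auto
lemma comp_neq[simp]: "comp l \<noteq> l" "l \<noteq> comp l" by (cases l; simp)+
lemma lit_true_comp[simp]: "lit_true a (comp l) = (\<not> lit_true a l)" by (cases l) auto
lemma var_eq_cases: "var m = var l \<Longrightarrow> m = l \<or> m = comp l" by (cases l; cases m) auto
lemma lit_true_upd[simp]: "var l \<noteq> v \<Longrightarrow> lit_true (a(v:=b)) l = lit_true a l" by (cases l) auto
lemma comp_inj[simp]: "comp l = comp m \<longleftrightarrow> l = m" by (metis comp_comp)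

definition mk :: "'v lit \<Rightarrow> bool" where "mk l = (case l of Pos _ \<Rightarrow> True | Neg _ \<Rightarrow> False)"
lemma lit_true_mk: "lit_true (a(var l := mk l)) l" by (cases l) (auto simp: mk_def)

definition phi :: "'v lit \<Rightarrow> 'v clause \<Rightarrow> 'v clause \<Rightarrow> 'v clause" where
  "phi x C0 E = (if comp x \<in> E then E - {comp x} \<union> (C0 - {x}) else E)"

lemma mu_finite: "min_unsat F \<Longrightarrow> finite F" by (simp add: min_unsat_def clause_set_def)
lemma mu_clause: "min_unsat F \<Longrightarrow> C \<in> F \<Longrightarrow> clause C" by (simp add: min_unsat_def clause_set_def)
lemma mu_unsat: "min_unsat F \<Longrightarrow> \<not> (\<exists>a. \<forall>C\<in>F. \<exists>m\<in>C. lit_true a m)"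
  by (simp add: min_unsat_def satisfiable_def)
lemma mu_minus: "min_unsat F \<Longrightarrow> E \<in> F \<Longrightarrow> \<exists>a. \<forall>C\<in>F-{E}. \<exists>m\<in>C. lit_true a m"
proof -
  assume "min_unsat F" "E \<in> F"
  hence "F - {E} \<subset> F" by auto
  thus ?thesis using \<open>min_unsat F\<close> unfolding min_unsat_def satisfiable_def by blast
qed
lemma clause_no_comp: "clause C \<Longrightarrow> l \<in> C \<Longrightarrow> comp l \<notin> C" by (simp add: clause_def)
lemma clause_finite: "clause C \<Longrightarrow> finite C" by (simp add: clause_def)

lemma ldeg1_ex: assumes "ldeg F l = 1" obtains C where "C \<in> F" "l \<in> C"
proof -
  from assms have "{C \<in> F. l \<in> C} \<noteq> {}" unfolding ldeg_def by (metis card.empty zero_neq_one)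
  thus ?thesis using that by auto
qed

lemma mu_pure:
  assumes mu: "min_unsat F" and vl: "var l \<in> vars F"
  shows "ldeg F l \<ge> 1"
proof (rule ccontr)
  assume "\<not> ldeg F l \<ge> 1"
  hence "ldeg F l = 0" by simp
  moreover have "finite {C \<in> F. l \<in> C}" using mu_finite[OF mu] by simp
  ultimately have none: "\<And>C. C \<in> F \<Longrightarrow> l \<notin> C" unfolding ldeg_def by auto
  from vl obtain E m where E: "E \<in> F" "m \<in> E" "var m = var l" unfolding vars_def vars_cl_def by auto
  hence mE: "m = comp l" using none var_eq_cases by blast
  obtain a where a: "\<forall>C\<in>F-{E}. \<exists>m\<in>C. lit_true a m" using mu_minus[OF mu E(1)] by blast
  define a' where "a' = a(var l := mk (comp l))"
  have tc: "lit_true a' (comp l)" using lit_true_mk[of a "comp l"] by (simp add: a'_def)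
  have "\<forall>C\<in>F. \<exists>m\<in>C. lit_true a' m"
  proof
    fix C assume C: "C \<in> F"
    show "\<exists>m\<in>C. lit_true a' m"
    proof (cases "C = E")
      case True thus ?thesis using E mE tc by blast
    next
      case False
      then obtain n where n: "n \<in> C" "lit_true a n" using a C by auto
      show ?thesis
      proof (cases "var n = var l")
        case True
        hence "n = comp l" using var_eq_cases none C n(1) by blast
        thus ?thesis using n(1) tc by blast
      next
        case False
        hence "lit_true a' n" using n(2) by (simp add: a'_def)
        thus ?thesis using n(1) by blast
      qed
    qed
  qed
  thus False using mu_unsat[OF mu] by blast
qed

lemma singular_iff:
  assumes mu: "min_unsat F"
  shows "singular F u \<longleftrightarrow> (\<exists>l. var l = u \<and> ldeg F l = 1)"
proof
  assume "singular F u"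
  hence "ldeg F (Pos u) = 1 \<or> ldeg F (Neg u) = 1" unfolding singular_def by linarith
  thus "\<exists>l. var l = u \<and> ldeg F l = 1" by (metis var.simps)
next
  assume "\<exists>l. var l = u \<and> ldeg F l = 1"
  then obtain l where l: "var l = u" "ldeg F l = 1" by blast
  obtain C where C: "C \<in> F" "l \<in> C" using ldeg1_ex[OF l(2)] by blast
  hence uv: "u \<in> vars F" using l by (auto simp: vars_def vars_cl_def)
  have "ldeg F (Pos u) \<ge> 1" "ldeg F (Neg u) \<ge> 1" using mu_pure[OF mu] uv by (metis var.simps)+
  moreover have "ldeg F (Pos u) = 1 \<or> ldeg F (Neg u) = 1" using l by (cases l) auto
  ultimately show "singular F u" unfolding singular_def using uv by linarith
qed




locale sing =
  fixes F :: "'v cls" and x :: "'v lit" and C0 :: "'v clause"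
  assumes mu: "min_unsat F" and C0F: "C0 \<in> F" and xC0: "x \<in> C0" and deg: "ldeg F x = 1"
begin

lemma uniq: assumes "E \<in> F" "x \<in> E" shows "E = C0"
proof -
  have "card {C \<in> F. x \<in> C} = 1" using deg by (simp add: ldeg_def)
  then obtain c where c: "{C \<in> F. x \<in> C} = {c}" by (rule card_1_singletonE)
  have "C0 = c" "E = c" using c C0F xC0 assms by blast+
  thus ?thesis by simp
qed

lemma cx_C0: "comp x \<notin> C0" using clause_no_comp mu_clause[OF mu C0F] xC0 by blast

lemma flip:
  assumes E: "E \<in> F" "comp x \<in> E" and a: "\<forall>C\<in>F-{E}. \<exists>m\<in>C. lit_true a m"
    and l: "l \<in> C0" "l \<noteq> x" "lit_true a l"
  shows False
proof -
  define a' where "a' = a(var x := mk (comp x))"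
  have tc: "lit_true a' (comp x)" using lit_true_mk[of a "comp x"] by (simp add: a'_def)
  have lv: "var l \<noteq> var x"
  proof
    assume "var l = var x"
    hence "l = comp x" using var_eq_cases l(2) by blast
    thus False using cx_C0 l(1) by simp
  qed
  have "\<forall>C\<in>F. \<exists>m\<in>C. lit_true a' m"
  proof
    fix C assume C: "C \<in> F"
    show "\<exists>m\<in>C. lit_true a' m"
    proof (cases "C = E")
      case True thus ?thesis using E tc by blast
    next
      case CE: False
      show ?thesis
      proof (cases "C = C0")
        case True
        have "lit_true a' l" using lv l(3) by (simp add: a'_def)
        thus ?thesis using True l(1) by blast
      next
        case False
        obtain n where n: "n \<in> C" "lit_true a n" using a C CE by auto
        show ?thesis
        proof (cases "var n = var x")
          case True
          hence "n = x \<or> n = comp x" using var_eq_cases by blast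
          moreover have "n \<noteq> x" using uniq[OF C] n(1) False by blast
          ultimately have "n = comp x" by blast
          thus ?thesis using n(1) tc by blast
        next
          case nv: False
          hence "lit_true a' n" using n(2) by (simp add: a'_def)
          thus ?thesis using n(1) by blast
        qed
      qed
    qed
  qed
  thus False using mu_unsat[OF mu] by blast
qed

lemma noclash:
  assumes D: "D \<in> F" "comp x \<in> D" and l: "l \<in> C0" "l \<noteq> x"
  shows "comp l \<notin> D"
proof
  assume cl: "comp l \<in> D"
  obtain a where a: "\<forall>C\<in>F-{D}. \<exists>m\<in>C. lit_true a m" using mu_minus[OF mu D(1)] by blast
  have "\<not> lit_true a (comp l)"
  proof
    assume t: "lit_true a (comp l)"
    have "\<forall>C\<in>F. \<exists>m\<in>C. lit_true a m"
    proof
      fix C assume "C \<in> F"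
      show "\<exists>m\<in>C. lit_true a m"
      proof (cases "C = D")
        case True thus ?thesis using t cl by blast
      next
        case False thus ?thesis using a \<open>C \<in> F\<close> by blast
      qed
    qed
    thus False using mu_unsat[OF mu] by blast
  qed
  hence "lit_true a l" by simp
  thus False using flip[OF D a l] by blast
qed

lemma falsified:
  assumes "E \<in> F" "\<forall>C\<in>F-{E}. \<exists>m\<in>C. lit_true a m"
  shows "\<forall>m\<in>E. \<not> lit_true a m"
proof (rule ccontr)
  assume "\<not> (\<forall>m\<in>E. \<not> lit_true a m)"
  hence "\<forall>C\<in>F. \<exists>m\<in>C. lit_true a m" using assms by blast
  thus False using mu_unsat[OF mu] by blast
qed

lemma phi_clause: assumes "E \<in> F" shows "clause (phi x C0 E)"
proof (cases "comp x \<in> E")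
  case False thus ?thesis using mu_clause[OF mu assms] by (simp add: phi_def)
next
  case True
  have cE: "clause E" and cC: "clause C0" using mu_clause[OF mu] assms C0F by auto
  have "finite (E - {comp x} \<union> (C0 - {x}))" using cE cC by (simp add: clause_def)
  moreover have "\<forall>l\<in>E - {comp x} \<union> (C0 - {x}). comp l \<notin> E - {comp x} \<union> (C0 - {x})"
  proof
    fix l assume l: "l \<in> E - {comp x} \<union> (C0 - {x})"
    show "comp l \<notin> E - {comp x} \<union> (C0 - {x})"
    proof
      assume cl: "comp l \<in> E - {comp x} \<union> (C0 - {x})"
      consider "l \<in> E" "comp l \<in> E" | "l \<in> C0" "comp l \<in> C0"
        | "l \<in> E" "comp l \<in> C0" "comp l \<noteq> x" | "l \<in> C0" "l \<noteq> x" "comp l \<in> E" using l cl by blast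
      thus False
      proof cases
        case 1 thus ?thesis using cE clause_no_comp by blast
      next
        case 2 thus ?thesis using cC clause_no_comp by blast
      next
        case 3 thus ?thesis using noclash[OF assms True, of "comp l"] by simp
      next
        case 4 thus ?thesis using noclash[OF assms True] by blast
      qed
    qed
  qed
  ultimately show ?thesis using True by (simp add: phi_def clause_def)
qed

lemma rep: "DP (var x) F = phi x C0 ` (F - {C0})"
proof (rule set_eqI, rule iffI)
  fix Y assume "Y \<in> DP (var x) F"
  then consider (k) "Y \<in> F" "var x \<notin> vars_cl Y"
    | (r) C D where "C \<in> F" "D \<in> F" "C \<inter> comp ` D = {Pos (var x)}" "Y = (C \<union> D) - {Pos (var x), Neg (var x)}"
    unfolding DP_def by blast
  then show "Y \<in> phi x C0 ` (F - {C0})"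
  proof cases
    case k
    have "Y \<noteq> C0" using xC0 k(2) by (auto simp: vars_cl_def)
    moreover have "comp x \<notin> Y" using k(2) unfolding vars_cl_def by (metis image_eqI var_comp)
    ultimately show ?thesis using k(1) by (auto simp: phi_def intro!: image_eqI[where x=Y])
  next
    case r
    have PC: "Pos (var x) \<in> C" using r(3) by blast
    have "Pos (var x) \<in> comp ` D" using r(3) by blast
    then obtain d where d: "d \<in> D" "Pos (var x) = comp d" by blast
    hence ND: "Neg (var x) \<in> D" by (cases d) auto
    have cC: "clause C" and cD: "clause D" using mu_clause[OF mu] r by auto
    have nC: "Neg (var x) \<notin> C" using clause_no_comp[OF cC PC] by simp
    have pD: "Pos (var x) \<notin> D" using clause_no_comp[OF cD ND] by simp
    show ?thesis
    proof (cases x)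
      case (Pos v)
      have "C = C0" using uniq[OF r(1)] PC Pos by simp
      have "D \<noteq> C0" using cx_C0 ND Pos by auto
      have "Y = phi x C0 D" using r(4) ND Pos \<open>C = C0\<close> nC pD by (auto simp: phi_def)
      thus ?thesis using \<open>D \<noteq> C0\<close> r(2) by blast
    next
      case (Neg v)
      have "D = C0" using uniq[OF r(2)] ND Neg by simp
      have "C \<noteq> C0" using cx_C0 PC Neg by auto
      have "Y = phi x C0 C" using r(4) PC Neg \<open>D = C0\<close> nC pD by (auto simp: phi_def)
      thus ?thesis using \<open>C \<noteq> C0\<close> r(1) by blast
    qed
  qed
next
  fix Y assume "Y \<in> phi x C0 ` (F - {C0})"
  then obtain E where E: "E \<in> F" "E \<noteq> C0" "Y = phi x C0 E" by blast
  have xE: "x \<notin> E" using uniq E by blast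
  show "Y \<in> DP (var x) F"
  proof (cases "comp x \<in> E")
    case False
    have "var x \<notin> vars_cl E"
    proof
      assume "var x \<in> vars_cl E"
      then obtain m where "m \<in> E" "var m = var x" by (auto simp: vars_cl_def)
      thus False using var_eq_cases xE False by blast
    qed
    thus ?thesis using E False by (auto simp: DP_def phi_def)
  next
    case True
    have cE: "clause E" using mu_clause[OF mu E(1)] .
    have nc: "\<And>l. l \<in> C0 \<Longrightarrow> comp l \<in> E \<Longrightarrow> l = x" using noclash[OF E(1) True] by blast
    show ?thesis
    proof (cases x)
      case (Pos v)
      have "C0 \<inter> comp ` E = {Pos v}"
      proof
        show "C0 \<inter> comp ` E \<subseteq> {Pos v}"
        proof
          fix l assume "l \<in> C0 \<inter> comp ` E"
          then obtain e where "l \<in> C0" "e \<in> E" "l = comp e" by blast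
          hence "comp l \<in> E" by simp
          thus "l \<in> {Pos v}" using nc \<open>l \<in> C0\<close> Pos by blast
        qed
        show "{Pos v} \<subseteq> C0 \<inter> comp ` E" using xC0 True Pos by (auto intro!: image_eqI[where x="Neg v"])
      qed
      moreover have "Y = (C0 \<union> E) - {Pos v, Neg v}"
        using E(3) True Pos cx_C0 clause_no_comp[OF cE True] by (auto simp: phi_def)
      ultimately show ?thesis using E(1) C0F Pos unfolding DP_def by auto
    next
      case (Neg v)
      have "E \<inter> comp ` C0 = {Pos v}"
      proof
        show "E \<inter> comp ` C0 \<subseteq> {Pos v}"
        proof
          fix e assume "e \<in> E \<inter> comp ` C0"
          then obtain l where "e \<in> E" "l \<in> C0" "e = comp l" by blast
          hence "l = x" using nc by blast
          thus "e \<in> {Pos v}" using \<open>e = comp l\<close> Neg by simp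
        qed
        show "{Pos v} \<subseteq> E \<inter> comp ` C0" using xC0 True Neg by (auto intro!: image_eqI[where x="Neg v"])
      qed
      moreover have "Y = (E \<union> C0) - {Pos v, Neg v}"
        using E(3) True Neg cx_C0 clause_no_comp[OF cE True] by (auto simp: phi_def)
      ultimately show ?thesis using E(1) C0F Neg unfolding DP_def by auto
    qed
  qed
qed

end



lemma mem_vars: "t \<in> vars F \<longleftrightarrow> (\<exists>C\<in>F. \<exists>m\<in>C. var m = t)"
  by (auto simp: vars_def vars_cl_def)

lemma image_filter: "(\<And>E. P (f E) = Q E) \<Longrightarrow> {Y \<in> f ` S. P Y} = f ` {E \<in> S. Q E}"
  by auto

context sing
begin

lemma inj_key:
  assumes E: "E \<in> F - {C0}" and E': "E' \<in> F - {C0}" and eq: "phi x C0 E = phi x C0 E'"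
    and ne: "E \<noteq> E'" and cx: "comp x \<in> E'"
  shows False
proof -
  obtain a where a: "\<forall>C\<in>F-{E'}. \<exists>m\<in>C. lit_true a m" using mu_minus[OF mu] E' by blast
  have fal: "\<forall>m\<in>E'. \<not> lit_true a m" using falsified a E' by blast
  obtain m where m: "m \<in> E" "lit_true a m" using a E ne by auto
  have "m \<noteq> comp x" using fal cx m(2) by blast
  hence "m \<in> phi x C0 E" using m(1) by (auto simp: phi_def)
  hence "m \<in> E' - {comp x} \<union> (C0 - {x})" using eq cx by (simp add: phi_def)
  hence "m \<in> C0" "m \<noteq> x" using fal m by auto
  then show False using flip[of E' a m] cx a m(2) E' by blast
qed

lemma inj: "inj_on (phi x C0) (F - {C0})"
proof (rule inj_onI, rule ccontr)
  fix E E' assume E: "E \<in> F - {C0}" and E': "E' \<in> F - {C0}" and eq: "phi x C0 E = phi x C0 E'"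
    and ne: "E \<noteq> E'"
  show False
  proof (cases "comp x \<in> E'")
    case True thus ?thesis using inj_key[OF E E' eq ne] by blast
  next
    case False
    show ?thesis
    proof (cases "comp x \<in> E")
      case True thus ?thesis using inj_key[OF E' E eq[symmetric]] ne by blast
    next
      case f2: False
      thus ?thesis using False eq ne by (simp add: phi_def)
    qed
  qed
qed

lemma exD: "\<exists>D\<in>F. comp x \<in> D"
proof -
  have "var (comp x) \<in> vars F" using xC0 C0F by (auto simp: vars_def vars_cl_def)
  hence "ldeg F (comp x) \<ge> 1" using mu_pure[OF mu] by blast
  hence "{D \<in> F. comp x \<in> D} \<noteq> {}" unfolding ldeg_def by (metis card.empty not_one_le_zero)
  thus ?thesis by blast
qed

lemma dp_unsat: "\<not> (\<exists>a. \<forall>C\<in>phi x C0 ` (F - {C0}). \<exists>m\<in>C. lit_true a m)"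
proof
  assume "\<exists>a. \<forall>C\<in>phi x C0 ` (F - {C0}). \<exists>m\<in>C. lit_true a m"
  then obtain a where a0: "\<forall>C\<in>phi x C0 ` (F - {C0}). \<exists>m\<in>C. lit_true a m" by blast
  have a: "\<forall>E\<in>F - {C0}. \<exists>m\<in>phi x C0 E. lit_true a m" using a0 by (simp only: ball_simps)
  have other: "\<And>E n. E \<in> F \<Longrightarrow> E \<noteq> C0 \<Longrightarrow> n \<in> E \<Longrightarrow> n \<noteq> comp x \<Longrightarrow> var n \<noteq> var x"
  proof
    fix E n assume "E \<in> F" "E \<noteq> C0" "n \<in> E" "n \<noteq> comp x" "var n = var x"
    hence "n = x" using var_eq_cases by blast
    thus False using uniq \<open>E \<in> F\<close> \<open>E \<noteq> C0\<close> \<open>n \<in> E\<close> by blast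
  qed
  show False
  proof (cases "\<exists>l\<in>C0 - {x}. lit_true a l")
    case True
    then obtain l where l: "l \<in> C0" "l \<noteq> x" "lit_true a l" by blast
    have lv: "var l \<noteq> var x"
    proof
      assume "var l = var x"
      hence "l = comp x" using var_eq_cases l(2) by blast
      thus False using cx_C0 l(1) by simp
    qed
    define a' where "a' = a(var x := mk (comp x))"
    have tc: "lit_true a' (comp x)" using lit_true_mk[of a "comp x"] by (simp add: a'_def)
    have "\<forall>C\<in>F. \<exists>m\<in>C. lit_true a' m"
    proof
      fix C assume C: "C \<in> F"
      show "\<exists>m\<in>C. lit_true a' m"
      proof (cases "C = C0")
        case True
        have "lit_true a' l" using lv l(3) by (simp add: a'_def)
        thus ?thesis using True l(1) by blast
      next
        case False
        show ?thesis
        proof (cases "comp x \<in> C")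
          case True thus ?thesis using tc by blast
        next
          case cf: False
          have "phi x C0 C = C" using cf by (simp add: phi_def)
          moreover have "C \<in> F - {C0}" using C False by blast
          ultimately obtain n where n: "n \<in> C" "lit_true a n" using a by metis
          have "n \<noteq> comp x" using cf n by blast
          hence "var n \<noteq> var x" using other C False n(1) by blast
          hence "lit_true a' n" using n(2) by (simp add: a'_def)
          thus ?thesis using n(1) by blast
        qed
      qed
    qed
    thus False using mu_unsat[OF mu] by blast
  next
    case False
    define a' where "a' = a(var x := mk x)"
    have tx: "lit_true a' x" using lit_true_mk[of a x] by (simp add: a'_def)
    have "\<forall>C\<in>F. \<exists>m\<in>C. lit_true a' m"
    proof
      fix C assume C: "C \<in> F"
      show "\<exists>m\<in>C. lit_true a' m"
      proof (cases "C = C0")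
        case True thus ?thesis using tx xC0 by blast
      next
        case CC: False
        obtain n where n: "n \<in> phi x C0 C" "lit_true a n" using a C CC by auto
        have nn: "n \<notin> C0 - {x}" using False n(2) by blast
        have nC: "n \<in> C \<and> n \<noteq> comp x"
        proof (cases "comp x \<in> C")
          case True
          hence "n \<in> C - {comp x} \<union> (C0 - {x})" using n(1) by (simp add: phi_def)
          thus ?thesis using nn by blast
        next
          case False
          thus ?thesis using n(1) by (auto simp: phi_def)
        qed
        hence "var n \<noteq> var x" using other C CC by blast
        hence "lit_true a' n" using n(2) by (simp add: a'_def)
        thus ?thesis using nC by blast
      qed
    qed
    thus False using mu_unsat[OF mu] by blast
  qed
qed

lemma dp_mu: "min_unsat (phi x C0 ` (F - {C0}))"
proof -
  have cs: "clause_set (phi x C0 ` (F - {C0}))"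
  proof -
    have "finite (phi x C0 ` (F - {C0}))" using mu_finite[OF mu] by simp
    moreover have "\<forall>C\<in>phi x C0 ` (F - {C0}). clause C"
    proof
      fix C assume "C \<in> phi x C0 ` (F - {C0})"
      then obtain E where "E \<in> F" "C = phi x C0 E" by blast
      thus "clause C" using phi_clause by simp
    qed
    ultimately show ?thesis unfolding clause_set_def by blast
  qed
  have min: "\<forall>G. G \<subset> phi x C0 ` (F - {C0}) \<longrightarrow> satisfiable G"
  proof (intro allI impI)
    fix G assume G: "G \<subset> phi x C0 ` (F - {C0})"
    obtain Y where Y: "Y \<in> phi x C0 ` (F - {C0})" "Y \<notin> G" using psubset_imp_ex_mem[OF G] by blast
    then obtain E where E: "E \<in> F - {C0}" "phi x C0 E \<notin> G" by (metis imageE)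
    obtain a where a: "\<forall>C\<in>F-{E}. \<exists>m\<in>C. lit_true a m" using mu_minus[OF mu] E by blast
    have "\<forall>E'\<in>F - {C0}. E' \<noteq> E \<longrightarrow> (\<exists>m\<in>phi x C0 E'. lit_true a m)"
    proof (intro ballI impI)
      fix E' assume E': "E' \<in> F - {C0}" "E' \<noteq> E"
      then obtain m where m: "m \<in> E'" "lit_true a m" using a by auto
      show "\<exists>m\<in>phi x C0 E'. lit_true a m"
      proof (cases "m = comp x")
        case False
        hence "m \<in> phi x C0 E'" using m(1) by (auto simp: phi_def)
        thus ?thesis using m(2) by blast
      next
        case True
        have "C0 \<in> F - {E}" using C0F E by auto
        then obtain l where l: "l \<in> C0" "lit_true a l" using a by blast
        have "l \<noteq> x" using l(2) m(2) True by auto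
        hence "l \<in> phi x C0 E'" using l(1) m(1) True by (auto simp: phi_def)
        thus ?thesis using l(2) by blast
      qed
    qed
    hence sat: "\<And>E'. E' \<in> F - {C0} \<Longrightarrow> E' \<noteq> E \<Longrightarrow> \<exists>m\<in>phi x C0 E'. lit_true a m" by blast
    have "\<forall>Y\<in>G. \<exists>m\<in>Y. lit_true a m"
    proof
      fix Y assume YG: "Y \<in> G"
      hence "Y \<in> phi x C0 ` (F - {C0})" using G by blast
      then obtain E' where E': "E' \<in> F - {C0}" "Y = phi x C0 E'" by (metis imageE)
      have "E' \<noteq> E" using YG E(2) E'(2) by blast
      from sat[OF E'(1) this] show "\<exists>m\<in>Y. lit_true a m" using E'(2) by simp
    qed
    thus "satisfiable G" unfolding satisfiable_def by blast
  qed
  have "\<not> satisfiable (phi x C0 ` (F - {C0}))" using dp_unsat unfolding satisfiable_def .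
  thus ?thesis unfolding min_unsat_def using cs min by blast
qed

lemma vars_dp: "vars (phi x C0 ` (F - {C0})) = vars F - {var x}"
proof
  show "vars (phi x C0 ` (F - {C0})) \<subseteq> vars F - {var x}"
  proof
    fix t assume "t \<in> vars (phi x C0 ` (F - {C0}))"
    then obtain Y m where Y: "Y \<in> phi x C0 ` (F - {C0})" "m \<in> Y" "t = var m"
      unfolding mem_vars by blast
    from Y(1) obtain E where E0: "E \<in> F - {C0}" "Y = phi x C0 E" by (rule imageE)
    have E: "E \<in> F" "E \<noteq> C0" "m \<in> phi x C0 E" "t = var m" using E0 Y by auto
    have xE: "x \<notin> E" using uniq E(1,2) by blast
    have mm0: "(m \<noteq> comp x \<and> m \<noteq> x) \<and> (\<exists>C\<in>F. m \<in> C)"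
    proof (cases "comp x \<in> E")
      case True
      hence "m \<in> E - {comp x} \<union> (C0 - {x})" using E(3) by (simp add: phi_def)
      thus ?thesis using xE cx_C0 E(1) C0F by blast
    next
      case False
      hence "m \<in> E" using E(3) by (simp add: phi_def)
      thus ?thesis using xE False E(1) by blast
    qed
    hence mm: "m \<noteq> comp x \<and> m \<noteq> x" "\<exists>C\<in>F. m \<in> C" by blast+
    have "var m \<noteq> var x" using mm(1) var_eq_cases by blast
    moreover have "var m \<in> vars F" using mm(2) unfolding mem_vars by blast
    ultimately show "t \<in> vars F - {var x}" using E(4) by auto
  qed
next
  show "vars F - {var x} \<subseteq> vars (phi x C0 ` (F - {C0}))"
  proof
    fix t assume t: "t \<in> vars F - {var x}"
    hence tF: "t \<in> vars F" and tx: "t \<noteq> var x" by auto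
    from tF obtain E m where E: "E \<in> F" "m \<in> E" "t = var m" unfolding mem_vars by blast
    have mv: "m \<noteq> comp x" "m \<noteq> x" using tx E(3) by auto
    show "t \<in> vars (phi x C0 ` (F - {C0}))"
    proof (cases "E = C0")
      case True
      obtain D where D: "D \<in> F" "comp x \<in> D" using exD by blast
      have "D \<noteq> C0" using D cx_C0 by blast
      hence "phi x C0 D \<in> phi x C0 ` (F - {C0})" using D(1) by blast
      moreover have "m \<in> phi x C0 D" using D E mv True by (simp add: phi_def)
      ultimately show ?thesis using E(3) unfolding mem_vars by blast
    next
      case False
      hence "phi x C0 E \<in> phi x C0 ` (F - {C0})" using E(1) by blast
      moreover have "m \<in> phi x C0 E" using E mv by (simp add: phi_def)
      ultimately show ?thesis using E(3) unfolding mem_vars by blast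
    qed
  qed
qed

lemma deg_keep:
  assumes z: "z \<notin> C0" "var z \<noteq> var x"
  shows "ldeg (phi x C0 ` (F - {C0})) z = ldeg F z"
proof -
  have zc: "z \<noteq> comp x" using z(2) by auto
  have "\<And>E. (z \<in> phi x C0 E) = (z \<in> E)" using z(1) zc by (simp add: phi_def)
  hence "{Y \<in> phi x C0 ` (F - {C0}). z \<in> Y} = phi x C0 ` {E \<in> F - {C0}. z \<in> E}"
    by (rule image_filter)
  moreover have "{E \<in> F - {C0}. z \<in> E} = {E \<in> F. z \<in> E}" using z(1) by auto
  moreover have "card (phi x C0 ` {E \<in> F - {C0}. z \<in> E}) = card {E \<in> F - {C0}. z \<in> E}"
    by (rule card_image, rule inj_on_subset[OF inj]) auto
  ultimately show ?thesis by (simp add: ldeg_def)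
qed

lemma deg_C0:
  assumes z: "z \<in> C0" "z \<noteq> x"
  shows "ldeg F (comp x) \<le> ldeg (phi x C0 ` (F - {C0})) z"
proof -
  have sub: "{D \<in> F. comp x \<in> D} \<subseteq> F - {C0}" using cx_C0 by auto
  have "phi x C0 ` {D \<in> F. comp x \<in> D} \<subseteq> {Y \<in> phi x C0 ` (F - {C0}). z \<in> Y}"
  proof
    fix Y assume "Y \<in> phi x C0 ` {D \<in> F. comp x \<in> D}"
    then obtain D where D: "D \<in> F" "comp x \<in> D" "Y = phi x C0 D" by blast
    have "z \<in> Y" using D z by (simp add: phi_def)
    moreover have "Y \<in> phi x C0 ` (F - {C0})" using D sub by blast
    ultimately show "Y \<in> {Y \<in> phi x C0 ` (F - {C0}). z \<in> Y}" by blast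
  qed
  moreover have "finite {Y \<in> phi x C0 ` (F - {C0}). z \<in> Y}" using mu_finite[OF mu] by simp
  ultimately have "card (phi x C0 ` {D \<in> F. comp x \<in> D}) \<le> card {Y \<in> phi x C0 ` (F - {C0}). z \<in> Y}"
    by (intro card_mono)
  moreover have "card (phi x C0 ` {D \<in> F. comp x \<in> D}) = card {D \<in> F. comp x \<in> D}"
    by (rule card_image, rule inj_on_subset[OF inj sub])
  ultimately show ?thesis by (simp add: ldeg_def)
qed

end



lemma phi_comm:
  assumes "x \<in> C0" "z \<in> Z0" "comp x \<notin> C0" "comp z \<notin> Z0" "z \<notin> C0" "x \<notin> Z0"
    "var x \<noteq> var z" "\<not> (comp z \<in> C0 \<and> comp x \<in> Z0)"
  shows "phi z (phi x C0 Z0) (phi x C0 E) = phi x (phi z Z0 C0) (phi z Z0 E)"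
proof -
  have d: "x \<noteq> z" "x \<noteq> comp z" "comp x \<noteq> z" "comp x \<noteq> comp z"
    using assms(7) by (metis var_comp)+
  show ?thesis using assms d unfolding phi_def by (auto split: if_splits)
qed

lemma comm_half:
  assumes X: "sing F x C0" and Z: "sing F z Z0" and ne: "C0 \<noteq> Z0" and vne: "var x \<noteq> var z"
  shows "DP (var z) (DP (var x) F) = (\<lambda>E. phi z (phi x C0 Z0) (phi x C0 E)) ` (F - {C0, Z0})"
proof -
  interpret X: sing F x C0 by fact
  interpret Z: sing F z Z0 by fact
  have zC0: "z \<notin> C0" using Z.uniq X.C0F ne by blast
  have Z0F1: "Z0 \<in> F - {C0}" using Z.C0F ne by blast
  have zc: "z \<noteq> comp x" using vne by (metis var_comp)
  have zin: "z \<in> phi x C0 Z0" using Z.xC0 zc by (simp add: phi_def)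
  have d1: "ldeg (phi x C0 ` (F - {C0})) z = 1" using X.deg_keep[OF zC0] vne Z.deg by simp
  interpret Z1: sing "phi x C0 ` (F - {C0})" z "phi x C0 Z0"
    using X.dp_mu Z0F1 zin d1 by unfold_locales auto
  have "DP (var z) (DP (var x) F) = phi z (phi x C0 Z0) ` (phi x C0 ` (F - {C0}) - {phi x C0 Z0})"
    using X.rep Z1.rep by simp
  also have "phi x C0 ` (F - {C0}) - {phi x C0 Z0} = phi x C0 ` ((F - {C0}) - {Z0})"
    using inj_on_image_set_diff[OF X.inj, of "F - {C0}" "{Z0}"] Z0F1 by simp
  also have "(F - {C0}) - {Z0} = F - {C0, Z0}" by blast
  finally show ?thesis by (simp add: image_image)
qed

lemma commute:
  assumes X: "sing F x C0" and Z: "sing F z Z0" and ne: "C0 \<noteq> Z0" and vne: "var x \<noteq> var z"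
  shows "DP (var z) (DP (var x) F) = DP (var x) (DP (var z) F)"
proof -
  interpret X: sing F x C0 by fact
  interpret Z: sing F z Z0 by fact
  have zC0: "z \<notin> C0" using Z.uniq X.C0F ne by blast
  have xZ0: "x \<notin> Z0" using X.uniq Z.C0F ne by blast
  have nc: "\<not> (comp z \<in> C0 \<and> comp x \<in> Z0)"
  proof
    assume h: "comp z \<in> C0 \<and> comp x \<in> Z0"
    have "comp z \<noteq> x" using vne by (metis var_comp)
    hence "comp (comp z) \<notin> Z0" using X.noclash[OF Z.C0F] h by blast
    thus False using Z.xC0 by simp
  qed
  have "DP (var z) (DP (var x) F) = (\<lambda>E. phi z (phi x C0 Z0) (phi x C0 E)) ` (F - {C0, Z0})"
    by (rule comm_half[OF X Z ne vne])
  also have "\<dots> = (\<lambda>E. phi x (phi z Z0 C0) (phi z Z0 E)) ` (F - {Z0, C0})"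
    using phi_comm[OF X.xC0 Z.xC0 X.cx_C0 Z.cx_C0 zC0 xZ0 vne nc] by (simp add: insert_commute)
  also have "\<dots> = DP (var x) (DP (var z) F)"
    by (rule comm_half[OF Z X ne[symmetric] vne[symmetric], symmetric])
  finally show ?thesis .
qed

lemma sing_intro: assumes "min_unsat F" "ldeg F x = 1" shows "\<exists>C0. sing F x C0"
proof -
  obtain C where "C \<in> F" "x \<in> C" using ldeg1_ex[OF assms(2)] by blast
  thus ?thesis using assms unfolding sing_def by blast
qed

lemma finite_vars: assumes "min_unsat F" shows "finite (vars F)"
  unfolding vars_def vars_cl_def
proof (rule finite_UN_I)
  show "finite F" using mu_finite[OF assms] .
  fix C assume "C \<in> F"
  thus "finite (var ` C)" using clause_finite mu_clause[OF assms] by blast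
qed

lemma step_facts:
  assumes mu: "min_unsat F" and s: "singular F v"
  shows "min_unsat (DP v F)" "vars (DP v F) = vars F - {v}" "v \<in> vars F"
    "nvars (DP v F) = nvars F - 1" "nvars (DP v F) < nvars F"
proof -
  obtain x where x: "var x = v" "ldeg F x = 1" using s singular_iff[OF mu] by blast
  obtain C0 where X: "sing F x C0" using sing_intro[OF mu x(2)] by blast
  interpret X: sing F x C0 by fact
  have r: "DP v F = phi x C0 ` (F - {C0})" using X.rep x(1) by simp
  show "min_unsat (DP v F)" unfolding r by (rule X.dp_mu)
  show vd: "vars (DP v F) = vars F - {v}" unfolding r X.vars_dp x(1) ..
  show vF: "v \<in> vars F" using X.xC0 X.C0F x(1) unfolding mem_vars by blast
  have fin: "finite (vars F)" by (rule finite_vars[OF mu])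
  show "nvars (DP v F) = nvars F - 1" unfolding nvars_def vd using vF fin by simp
  moreover have "nvars F > 0" unfolding nvars_def using vF fin card_gt_0_iff by blast
  ultimately show "nvars (DP v F) < nvars F" by simp
qed

lemma step_mu: assumes "sDP_step F G" shows "min_unsat G"
proof -
  obtain v where "min_unsat F" "singular F v" "G = DP v F" using assms unfolding sDP_step_def by blast
  thus ?thesis using step_facts(1) by simp
qed

lemma star_mu: "sDP_step\<^sup>*\<^sup>* F G \<Longrightarrow> min_unsat F \<Longrightarrow> min_unsat G"
proof (induction rule: rtranclp_induct)
  case base thus ?case .
next
  case (step y z) thus ?case using step_mu by blast
qed

lemma exists_nf: "min_unsat H \<Longrightarrow> \<exists>G. G \<in> sDP H"
proof (induction "nvars H" arbitrary: H rule: less_induct)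
  case less
  show ?case
  proof (cases "nonsingular H")
    case True
    have "sDP_step\<^sup>*\<^sup>* H H" by simp
    thus ?thesis using True less.prems unfolding sDP_def by blast
  next
    case False
    then obtain u where u: "singular H u" unfolding nonsingular_def by blast
    have st: "sDP_step H (DP u H)" using less.prems u unfolding sDP_step_def by blast
    obtain G where G: "G \<in> sDP (DP u H)"
      using less.hyps[OF step_facts(5)[OF less.prems u] step_facts(1)[OF less.prems u]] by blast
    hence "sDP_step\<^sup>*\<^sup>* (DP u H) G" "nonsingular G" "min_unsat G" unfolding sDP_def by auto
    moreover have "sDP_step\<^sup>*\<^sup>* H G" using converse_rtranclp_into_rtranclp[OF st calculation(1)] .
    ultimately show ?thesis unfolding sDP_def by blast
  qed
qed

lemma sDP_trans: assumes "sDP_step\<^sup>*\<^sup>* F H" "G \<in> sDP H" shows "G \<in> sDP F"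
proof -
  have "sDP_step\<^sup>*\<^sup>* H G" "nonsingular G" "min_unsat G" using assms(2) unfolding sDP_def by auto
  moreover have "sDP_step\<^sup>*\<^sup>* F G" using rtranclp_trans[OF assms(1) calculation(1)] .
  ultimately show ?thesis unfolding sDP_def by blast
qed




lemma join:
  fixes F F1 F2 H G1 G2 :: "'v cls"
  assumes IH: "\<And>(F'::'v cls) (G1::'v cls) (G2::'v cls). nvars F' < nvars F \<Longrightarrow> min_unsat F' \<Longrightarrow> G1 \<in> sDP F' \<Longrightarrow> G2 \<in> sDP F' \<Longrightarrow> nvars G1 = nvars G2"
  and F1: "min_unsat F1" "nvars F1 < nvars F" and F2: "min_unsat F2" "nvars F2 < nvars F"
  and H1: "sDP_step\<^sup>*\<^sup>* F1 H" and H2: "sDP_step\<^sup>*\<^sup>* F2 H"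
  and G1: "G1 \<in> sDP F1" and G2: "G2 \<in> sDP F2"
  shows "nvars G1 = nvars G2"
proof -
  have "min_unsat H" using star_mu[OF H1 F1(1)] .
  then obtain G where G: "G \<in> sDP H" using exists_nf by blast
  have "nvars G1 = nvars G" using IH[OF F1(2) F1(1) G1 sDP_trans[OF H1 G]] .
  moreover have "nvars G2 = nvars G" using IH[OF F2(2) F2(1) G2 sDP_trans[OF H2 G]] .
  ultimately show ?thesis by simp
qed

lemma nf_self: "nonsingular H \<Longrightarrow> G \<in> sDP H \<Longrightarrow> G = H"
  unfolding sDP_def by (auto elim: converse_rtranclpE simp: sDP_step_def nonsingular_def)

lemma first_step:
  assumes "G \<in> sDP F" "\<not> nonsingular F"
  shows "\<exists>v. singular F v \<and> G \<in> sDP (DP v F)"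
proof -
  have r: "sDP_step\<^sup>*\<^sup>* F G" and n: "nonsingular G" "min_unsat G" using assms(1) unfolding sDP_def by auto
  from r show ?thesis
  proof (cases rule: converse_rtranclpE)
    case base thus ?thesis using assms(2) n by simp
  next
    case (step F1)
    then obtain v where "singular F v" "F1 = DP v F" unfolding sDP_step_def by blast
    thus ?thesis using step(2) n unfolding sDP_def by blast
  qed
qed

lemma bad_transfer:
  assumes X: "sing F x C0" and k2: "ldeg F (comp x) \<ge> 2"
    and wC0: "\<And>z. var z = w \<Longrightarrow> ldeg F z = 1 \<Longrightarrow> z \<in> C0"
    and su: "singular (DP (var x) F) u"
  shows "\<exists>z. var z = u \<and> ldeg F z = 1 \<and> z \<notin> C0 \<and> u \<noteq> var x \<and> u \<noteq> w"
proof -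
  interpret X: sing F x C0 by fact
  have mu1: "min_unsat (DP (var x) F)" using X.rep X.dp_mu by simp
  obtain z where z: "var z = u" "ldeg (DP (var x) F) z = 1" using su singular_iff[OF mu1] by blast
  have uv: "u \<in> vars (DP (var x) F)" using su unfolding singular_def by blast
  hence uvx: "u \<noteq> var x" using X.rep X.vars_dp by simp
  have zC0: "z \<notin> C0"
  proof
    assume "z \<in> C0"
    moreover have "z \<noteq> x" using uvx z(1) by blast
    ultimately have "ldeg F (comp x) \<le> ldeg (DP (var x) F) z" using X.deg_C0 X.rep by simp
    thus False using k2 z(2) by simp
  qed
  have d: "ldeg F z = 1" using X.deg_keep[OF zC0] z X.rep uvx by simp
  moreover have "u \<noteq> w" using wC0 zC0 z(1) d by blast
  ultimately show ?thesis using z(1) zC0 uvx by blast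
qed

lemma peak:
  fixes F G1 G2 :: "'v cls"
  assumes mu: "min_unsat F"
  and IH: "\<And>(F'::'v cls) (G1::'v cls) (G2::'v cls). nvars F' < nvars F \<Longrightarrow> min_unsat F' \<Longrightarrow> G1 \<in> sDP F' \<Longrightarrow> G2 \<in> sDP F' \<Longrightarrow> nvars G1 = nvars G2"
  and sv: "singular F v" and sw: "singular F w"
  and G1: "G1 \<in> sDP (DP v F)" and G2: "G2 \<in> sDP (DP w F)"
  shows "nvars G1 = nvars G2"
proof -
  note f1 = step_facts[OF mu sv] and f2 = step_facts[OF mu sw]
  show ?thesis
  proof (cases "v = w")
    case True thus ?thesis using IH[OF f1(5) f1(1) G1] G2 by simp
  next
    case vw: False
    show ?thesis
    proof (cases "\<exists>x y C0 E0. var x = v \<and> var y = w \<and> sing F x C0 \<and> sing F y E0 \<and> C0 \<noteq> E0")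
      case True
      then obtain x y C0 E0 where xy: "var x = v" "var y = w" "sing F x C0" "sing F y E0" "C0 \<noteq> E0" by blast
      interpret X: sing F x C0 by fact
      interpret Y: sing F y E0 by fact
      have yC0: "y \<notin> C0" using Y.uniq X.C0F xy(5) by blast
      have xE0: "x \<notin> E0" using X.uniq Y.C0F xy(5) by blast
      have "ldeg (DP v F) y = 1" using X.rep X.deg_keep[OF yC0] xy Y.deg vw by simp
      hence s1: "singular (DP v F) w" using singular_iff[OF f1(1)] xy(2) by blast
      have "ldeg (DP w F) x = 1" using Y.rep Y.deg_keep[OF xE0] xy X.deg vw by simp
      hence s2: "singular (DP w F) v" using singular_iff[OF f2(1)] xy(1) by blast
      have eq: "DP w (DP v F) = DP v (DP w F)" using commute[OF xy(3,4,5)] xy vw by simp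
      have h1: "sDP_step (DP v F) (DP w (DP v F))" using f1(1) s1 unfolding sDP_step_def by blast
      have h2: "sDP_step (DP w F) (DP w (DP v F))" using f2(1) s2 eq unfolding sDP_step_def by metis
      show ?thesis using join[OF IH f1(1) f1(5) f2(1) f2(5) r_into_rtranclp[of sDP_step, OF h1] r_into_rtranclp[of sDP_step, OF h2] G1 G2] .
    next
      case bad: False
      obtain x where x: "var x = v" "ldeg F x = 1" using sv singular_iff[OF mu] by blast
      obtain C0 where X: "sing F x C0" using sing_intro[OF mu x(2)] by blast
      obtain y where y: "var y = w" "ldeg F y = 1" using sw singular_iff[OF mu] by blast
      obtain E0 where Y: "sing F y E0" using sing_intro[OF mu y(2)] by blast
      interpret X: sing F x C0 by fact
      interpret Y: sing F y E0 by fact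
      have E0C0: "E0 = C0" using bad x y X Y by blast
      have wC0: "\<And>z. var z = w \<Longrightarrow> ldeg F z = 1 \<Longrightarrow> z \<in> C0"
      proof -
        fix z assume z: "var z = w" "ldeg F z = 1"
        obtain Z0 where Z: "sing F z Z0" using sing_intro[OF mu z(2)] by blast
        have "C0 = Z0" using bad x(1) z(1) X Z by blast
        thus "z \<in> C0" using Z unfolding sing_def by blast
      qed
      have vC0: "\<And>z. var z = v \<Longrightarrow> ldeg F z = 1 \<Longrightarrow> z \<in> E0"
      proof -
        fix z assume z: "var z = v" "ldeg F z = 1"
        obtain Z0 where Z: "sing F z Z0" using sing_intro[OF mu z(2)] by blast
        have "Z0 = E0" using bad y(1) z(1) Y Z by blast
        thus "z \<in> E0" using Z unfolding sing_def by blast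
      qed
      have k2: "ldeg F (comp x) \<ge> 2"
      proof -
        have "ldeg F (comp x) \<ge> 1" using mu_pure[OF mu] f1(3) x(1) by simp
        moreover have "ldeg F (comp x) \<noteq> 1"
        proof
          assume "ldeg F (comp x) = 1"
          hence "comp x \<in> E0" using vC0 x(1) by simp
          thus False using X.cx_C0 E0C0 by simp
        qed
        ultimately show ?thesis by linarith
      qed
      have m2: "ldeg F (comp y) \<ge> 2"
      proof -
        have "ldeg F (comp y) \<ge> 1" using mu_pure[OF mu] f2(3) y(1) by simp
        moreover have "ldeg F (comp y) \<noteq> 1"
        proof
          assume "ldeg F (comp y) = 1"
          hence "comp y \<in> C0" using wC0 y(1) by simp
          thus False using Y.cx_C0 E0C0 by simp
        qed
        ultimately show ?thesis by linarith
      qed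
      show ?thesis
      proof (cases "nonsingular (DP v F) \<and> nonsingular (DP w F)")
        case True
        hence "G1 = DP v F" "G2 = DP w F" using nf_self G1 G2 by blast+
        moreover have "nvars F \<noteq> 0" using f1(5) by simp
        ultimately show ?thesis using f1(4) f2(4) by simp
      next
        case False
        then obtain u where "singular (DP v F) u \<or> singular (DP w F) u" unfolding nonsingular_def by blast
        then obtain z where z: "var z = u" "ldeg F z = 1" "z \<notin> C0" "u \<noteq> v" "u \<noteq> w"
        proof
          assume "singular (DP v F) u"
          thus ?thesis using bad_transfer[OF X k2 wC0] x(1) that by blast
        next
          assume "singular (DP w F) u"
          thus ?thesis using bad_transfer[OF Y m2 vC0] y(1) that E0C0 by blast
        qed
        obtain Z0 where Z: "sing F z Z0" using sing_intro[OF mu z(2)] by blast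
        interpret Z: sing F z Z0 by fact
        have CZ: "C0 \<noteq> Z0" using Z.xC0 z(3) by blast
        have EZ: "E0 \<noteq> Z0" using CZ E0C0 by simp
        have su: "singular F u" using singular_iff[OF mu] z(1,2) by blast
        note f3 = step_facts[OF mu su]
        have xZ0: "x \<notin> Z0" using X.uniq Z.C0F CZ by blast
        have yZ0: "y \<notin> Z0" using Y.uniq Z.C0F EZ by blast
        have zE0: "z \<notin> E0" using z(3) E0C0 by simp
        have "ldeg (DP v F) z = 1" using X.rep X.deg_keep[OF z(3)] x(1) z by simp
        hence s1: "singular (DP v F) u" using singular_iff[OF f1(1)] z(1) by blast
        have "ldeg (DP u F) x = 1" using Z.rep Z.deg_keep[OF xZ0] x z X.deg by simp
        hence s3: "singular (DP u F) v" using singular_iff[OF f3(1)] x(1) by blast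
        have "ldeg (DP w F) z = 1" using Y.rep Y.deg_keep[OF zE0] y z by simp
        hence s2: "singular (DP w F) u" using singular_iff[OF f2(1)] z(1) by blast
        have "ldeg (DP u F) y = 1" using Z.rep Z.deg_keep[OF yZ0] y z Y.deg by simp
        hence s3': "singular (DP u F) w" using singular_iff[OF f3(1)] y(1) by blast
        have eq1: "DP u (DP v F) = DP v (DP u F)" using commute[OF X Z CZ] x z by simp
        have eq2: "DP u (DP w F) = DP w (DP u F)" using commute[OF Y Z EZ] y z by simp
        have a1: "sDP_step (DP v F) (DP u (DP v F))" using f1(1) s1 unfolding sDP_step_def by blast
        have a2: "sDP_step (DP u F) (DP u (DP v F))" using f3(1) s3 eq1 unfolding sDP_step_def by metis
        have b1: "sDP_step (DP w F) (DP u (DP w F))" using f2(1) s2 unfolding sDP_step_def by blast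
        have b2: "sDP_step (DP u F) (DP u (DP w F))" using f3(1) s3' eq2 unfolding sDP_step_def by metis
        obtain G3 where G3: "G3 \<in> sDP (DP u F)" using exists_nf[OF f3(1)] by blast
        have "nvars G1 = nvars G3"
          using join[OF IH f1(1) f1(5) f3(1) f3(5) r_into_rtranclp[of sDP_step, OF a1] r_into_rtranclp[of sDP_step, OF a2] G1 G3] .
        moreover have "nvars G3 = nvars G2"
          using join[OF IH f3(1) f3(5) f2(1) f2(5) r_into_rtranclp[of sDP_step, OF b2] r_into_rtranclp[of sDP_step, OF b1] G3 G2] .
        ultimately show ?thesis by simp
      qed
    qed
  qed
qed

lemma main: "min_unsat F \<Longrightarrow> G1 \<in> sDP F \<Longrightarrow> G2 \<in> sDP F \<Longrightarrow> nvars G1 = nvars G2"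
proof (induction "nvars F" arbitrary: F G1 G2 rule: less_induct)
  case less
  show ?case
  proof (cases "nonsingular F")
    case True thus ?thesis using nf_self less.prems by metis
  next
    case False
    obtain v where v: "singular F v" "G1 \<in> sDP (DP v F)" using first_step[OF less.prems(2) False] by blast
    obtain w where w: "singular F w" "G2 \<in> sDP (DP w F)" using first_step[OF less.prems(3) False] by blast
    show ?thesis
    proof (rule peak[OF less.prems(1) _ v(1) w(1) v(2) w(2)])
      fix F' G1 G2 :: "'a cls"
      assume "nvars F' < nvars F" "min_unsat F'" "G1 \<in> sDP F'" "G2 \<in> sDP F'"
      thus "nvars G1 = nvars G2" using less.hyps by blast
    qed
  qed
qed

theorem corollary64:
  fixes F F' F'' :: "'v cls"
  assumes "min_unsat F"
    and "F' \<in> sDP F" and "F'' \<in> sDP F"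
  shows "nvars F' = nvars F''"
  using main assms by blast



end
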